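(* There exist a financial system $S$ in the base model (all contracts of the same priority), a bank $v$ and a number $x>0$ such that: $S$ has exactly two solutions $r_1\neq r_2$, with $q_v(r_2)=0$; and the system $S'$ obtained from $S$ by replacing $e_v$ with $e_v+x$ (everything else unchanged) has exactly one solution $r'$, which satisfies $r'=r_1$ and $q'_v(r')>x$, where $q'_v$ is the payoff of $v$ in $S'$.
   Context: A financial system with payment priorities consists of: a finite set $V$ of banks; external assets $e_v\ge 0$ for each $v\in V$; a number $P\ge 1$ of priority levels; and a finite set of contracts, each of which is either a debt contract from a debtor $u$ to a creditor $v\neq u$ with weight $c>0$, or a credit default swap (CDS) from a debtor $u$ to a creditor $v\neq u$ in reference to a bank $w\notin\{u,v\}$ (the reference entity) with weight $c>0$. Every contract has a priority in $\{1,\dots,P\}$ (1 is the highest priority). It is assumed that every bank that is the reference entity of some CDS is the debtor of at least one debt contract of positive weight. Given a recovery rate vector $r\in[0,1]^V$: the liability of a contract $k$ is $l_k(r)=c$ if $k$ is a debt of weight $c$, and $l_k(r)=c\,(1-r_w)$ if $k$ is a CDS of weight $c$ in reference to $w$. For a bank $v$, $l_v(r)$ is the sum of the liabilities of the contracts with debtor $v$; $l_v^{(\rho)}(r)$ is the sum of the liabilities of contracts with debtor $v$ and priority $\rho$; and $l_v^{(\le\rho)}(r)=\sum_{i=1}^{\rho}l_v^{(i)}(r)$ (with $l_v^{(\le 0)}=0$). The payment on a contract $k$ with debtor $v$ and priority $\rho$ is $p_k(r)=l_k(r)\cdot\min\{1,\max\{0,(r_v l_v(r)-l_v^{(\le\rho-1)}(r))/l_v^{(\rho)}(r)\}\}$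 (and $p_k(r)=0$ if $l_v^{(\rho)}(r)=0$). The assets of $v$ are $a_v(r)=e_v+\sum_k p_k(r)$, summing over contracts $k$ with creditor $v$. A vector $r\in[0,1]^V$ is a solution (clearing vector) if for every $v\in V$: $r_v=1$ when $a_v(r)\ge l_v(r)$, and $r_v=a_v(r)/l_v(r)$ when $a_v(r)<l_v(r)$. The payoff of $v$ is $q_v(r)=\max\{a_v(r)-l_v(r),0\}$. When $P=1$, payments reduce to $p_k(r)=r_v\,l_k(r)$ (principle of proportionality); this is called the base model. *)

theory Defs
  imports Main "HOL-Library.Extended_Real" Complex_Main
begin

text \<open>Banks are natural numbers. A contract is either a debt
  (debtor, creditor, weight, priority) or a CDS
  (debtor, creditor, reference entity, weight, priority).\<close>

datatype contract =
    Debt nat nat real nat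
  | CDS nat nat nat real nat

fun debtor :: "contract \<Rightarrow> nat" where
  "debtor (Debt u v c \<rho>) = u"
| "debtor (CDS u v w c \<rho>) = u"

fun creditor :: "contract \<Rightarrow> nat" where
  "creditor (Debt u v c \<rho>) = v"
| "creditor (CDS u v w c \<rho>) = v"

fun weight :: "contract \<Rightarrow> real" where
  "weight (Debt u v c \<rho>) = c"
| "weight (CDS u v w c \<rho>) = c"

fun priority :: "contract \<Rightarrow> nat" where
  "priority (Debt u v c \<rho>) = \<rho>"
| "priority (CDS u v w c \<rho>) = \<rho>"

record fin_system =
  banks :: "nat set"
  ext :: "nat \<Rightarrow> real"
  levels :: nat
  contracts :: "contract set"

fun contract_wf :: "fin_system \<Rightarrow> contract \<Rightarrow> bool" where
  "contract_wf S (Debt u v c \<rho>) \<longleftrightarrow>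
     u \<in> banks S \<and> v \<in> banks S \<and> u \<noteq> v \<and> c > 0 \<and> 1 \<le> \<rho> \<and> \<rho> \<le> levels S"
| "contract_wf S (CDS u v w c \<rho>) \<longleftrightarrow>
     u \<in> banks S \<and> v \<in> banks S \<and> w \<in> banks S \<and> u \<noteq> v \<and> w \<noteq> u \<and> w \<noteq> v
     \<and> c > 0 \<and> 1 \<le> \<rho> \<and> \<rho> \<le> levels S
     \<and> (\<exists>k\<in>contracts S. \<exists>v' c' \<rho>'. k = Debt w v' c' \<rho>' \<and> c' > 0)"

definition wf_system :: "fin_system \<Rightarrow> bool" where
  "wf_system S \<longleftrightarrow> finite (banks S) \<and> (\<forall>v\<in>banks S. ext S v \<ge> 0) \<and> levels S \<ge> 1
     \<and> finite (contracts S) \<and> (\<forall>k\<in>contracts S. contract_wf S k)"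

definition base_model :: "fin_system \<Rightarrow> bool" where
  "base_model S \<longleftrightarrow> wf_system S \<and> levels S = 1"

fun liab :: "(nat \<Rightarrow> real) \<Rightarrow> contract \<Rightarrow> real" where
  "liab r (Debt u v c \<rho>) = c"
| "liab r (CDS u v w c \<rho>) = c * (1 - r w)"

definition bank_liab :: "fin_system \<Rightarrow> (nat \<Rightarrow> real) \<Rightarrow> nat \<Rightarrow> real" where
  "bank_liab S r v = (\<Sum>k\<in>{k\<in>contracts S. debtor k = v}. liab r k)"

definition bank_liab_prio :: "fin_system \<Rightarrow> (nat \<Rightarrow> real) \<Rightarrow> nat \<Rightarrow> nat \<Rightarrow> real" where
  "bank_liab_prio S r v \<rho> = (\<Sum>k\<in>{k\<in>contracts S. debtor k = v \<and> priority k = \<rho>}. liab r k)"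

definition bank_liab_upto :: "fin_system \<Rightarrow> (nat \<Rightarrow> real) \<Rightarrow> nat \<Rightarrow> nat \<Rightarrow> real" where
  "bank_liab_upto S r v \<rho> = (\<Sum>i=1..\<rho>. bank_liab_prio S r v i)"

definition payment :: "fin_system \<Rightarrow> (nat \<Rightarrow> real) \<Rightarrow> contract \<Rightarrow> real" where
  "payment S r k =
    (let v = debtor k; \<rho> = priority k in
     if bank_liab_prio S r v \<rho> = 0 then 0
     else liab r k * min 1 (max 0 ((r v * bank_liab S r v - bank_liab_upto S r v (\<rho> - 1))
                                   / bank_liab_prio S r v \<rho>)))"

definition assets :: "fin_system \<Rightarrow> (nat \<Rightarrow> real) \<Rightarrow> nat \<Rightarrow> real" where
  "assets S r v = ext S v + (\<Sum>k\<in>{k\<in>contracts S. creditor k = v}. payment S r k)"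

text \<open>Clearing vectors: recovery rates in [0,1] on the banks; by convention
  the (irrelevant) value outside the set of banks is fixed to 0 so that solutions
  are counted as vectors in [0,1]^V.\<close>
definition solution :: "fin_system \<Rightarrow> (nat \<Rightarrow> real) \<Rightarrow> bool" where
  "solution S r \<longleftrightarrow>
     (\<forall>v. v \<notin> banks S \<longrightarrow> r v = 0) \<and>
     (\<forall>v\<in>banks S. 0 \<le> r v \<and> r v \<le> 1 \<and>
        (assets S r v \<ge> bank_liab S r v \<longrightarrow> r v = 1) \<and>
        (assets S r v < bank_liab S r v \<longrightarrow> r v = assets S r v / bank_liab S r v))"

definition payoff :: "fin_system \<Rightarrow> (nat \<Rightarrow> real) \<Rightarrow> nat \<Rightarrow> real" where
  "payoff S r v = max (assets S r v - bank_liab S r v) 0"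

end

theory Submission imports Defs begin

definition CC :: "contract set" where
  "CC = {Debt 0 1 1 1, Debt 1 2 1 1, CDS 0 2 1 3 1}"

definition Sa :: "real \<Rightarrow> fin_system" where
  "Sa a = \<lparr>banks = {0,1,2}, ext = (\<lambda>v. if v = 0 then a else 0), levels = 1, contracts = CC\<rparr>"

lemma set_d0: "{k\<in>CC. debtor k = 0} = {Debt 0 1 1 1, CDS 0 2 1 3 1}" by (auto simp: CC_def)
lemma set_d1: "{k\<in>CC. debtor k = 1} = {Debt 1 2 1 1}" by (auto simp: CC_def)
lemma set_d2: "{k\<in>CC. debtor k = 2} = {}" by (auto simp: CC_def)
lemma set_c0: "{k\<in>CC. creditor k = 0} = {}" by (auto simp: CC_def)
lemma set_c1: "{k\<in>CC. creditor k = 1} = {Debt 0 1 1 1}" by (auto simp: CC_def)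
lemma set_c2: "{k\<in>CC. creditor k = 2} = {Debt 1 2 1 1, CDS 0 2 1 3 1}" by (auto simp: CC_def)
lemma prio1: "{k\<in>CC. debtor k = v \<and> priority k = Suc 0} = {k\<in>CC. debtor k = v}" by (auto simp: CC_def)
lemmas sets' = set_d0[simplified] set_d1[simplified] set_d2[simplified] set_c0[simplified] set_c1[simplified] set_c2[simplified]

lemma cSa: "contracts (Sa a) = CC" by (simp add: Sa_def)
lemma eSa: "ext (Sa a) = (\<lambda>v. if v = 0 then a else 0)" by (simp add: Sa_def)
lemma L0: "bank_liab (Sa a) r 0 = 1 + 3*(1 - r 1)"
  by (simp only: bank_liab_def cSa set_d0 set_d1 set_d2) simp
lemma L1: "bank_liab (Sa a) r 1 = 1"
  by (simp only: bank_liab_def cSa set_d0 set_d1 set_d2) simp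
lemma L2: "bank_liab (Sa a) r 2 = 0"
  by (simp only: bank_liab_def cSa set_d0 set_d1 set_d2) simp

lemmas L1' = L1[simplified]
lemma pay_gen: assumes "k \<in> CC" "bank_liab (Sa a) r (debtor k) \<noteq> 0" "0 \<le> r (debtor k)" "r (debtor k) \<le> 1"
  shows "payment (Sa a) r k = liab r k * r (debtor k)"
proof -
  have p: "priority k = 1" using assms(1) by (auto simp: CC_def)
  have "bank_liab_prio (Sa a) r (debtor k) 1 = bank_liab (Sa a) r (debtor k)"
    by (simp add: bank_liab_prio_def bank_liab_def Sa_def prio1)
  then show ?thesis using assms p
    by (simp add: payment_def bank_liab_upto_def Let_def)
qed

lemma A0: "assets (Sa a) r 0 = a"
  by (simp only: assets_def cSa eSa set_c0 set_c1 set_c2) simp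
lemma A1: assumes "0 \<le> r 0" "r 0 \<le> 1" "r 1 \<le> 1"
  shows "assets (Sa a) r 1 = r 0"
proof -
  have "payment (Sa a) r (Debt 0 1 1 1) = r 0"
    using pay_gen[of "Debt 0 1 1 1" a r] assms by (simp add: CC_def L0)
  then show ?thesis by (simp only: assets_def cSa eSa set_c0 set_c1 set_c2) simp
qed
lemma A2: assumes "0 \<le> r 0" "r 0 \<le> 1" "0 \<le> r 1" "r 1 \<le> 1"
  shows "assets (Sa a) r 2 = r 1 + 3 * (1 - r 1) * r 0"
proof -
  have "payment (Sa a) r (Debt 1 2 1 1) = r 1"
    using pay_gen[of "Debt 1 2 1 1" a r] assms by (simp add: CC_def L1')
  moreover have "payment (Sa a) r (CDS 0 2 1 3 1) = 3 * (1 - r 1) * r 0"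
    using pay_gen[of "CDS 0 2 1 3 1" a r] assms by (simp add: CC_def L0)
  ultimately show ?thesis by (simp only: assets_def cSa eSa set_c0 set_c1 set_c2) simp
qed

definition rone :: "nat \<Rightarrow> real" where "rone = (\<lambda>v. if v \<in> {0,1,2} then 1 else 0)"
definition rtwo :: "nat \<Rightarrow> real" where "rtwo = (\<lambda>v. if v = 0 \<or> v = 1 then 2/3 else if v = 2 then 1 else 0)"

lemma bSa: "banks (Sa a) = {0,1,2}" by (simp add: Sa_def)

lemma sol_iff:
  "solution (Sa a) r \<longleftrightarrow> (\<forall>v. v \<notin> {0,1,2} \<longrightarrow> r v = 0) \<and>
     (\<forall>v\<in>{0,1,2}. 0 \<le> r v \<and> r v \<le> 1 \<and>
        (assets (Sa a) r v \<ge> bank_liab (Sa a) r v \<longrightarrow> r v = 1) \<and>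
        (assets (Sa a) r v < bank_liab (Sa a) r v \<longrightarrow> r v = assets (Sa a) r v / bank_liab (Sa a) r v))"
  unfolding solution_def bSa by simp

lemma sol_one: assumes "a \<ge> 1" shows "solution (Sa a) rone"
proof -
  have "assets (Sa a) rone 1 = 1" using A1[of rone a] by (simp add: rone_def)
  moreover have "assets (Sa a) rone 2 = 1" using A2[of rone a] by (simp add: rone_def)
  ultimately show ?thesis using assms unfolding sol_iff
    by (simp add: A0 L0 L1 L1' L2 rone_def)
qed

lemma sol_two: "solution (Sa (4/3)) rtwo"
proof -
  have "assets (Sa (4/3)) rtwo 1 = 2/3" using A1[of rtwo "4/3"] by (simp add: rtwo_def)
  moreover have "assets (Sa (4/3)) rtwo 2 = 2/3 + 2/3" using A2[of rtwo "4/3"] by (simp add: rtwo_def)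
  ultimately show ?thesis unfolding sol_iff
    by (simp add: A0 L0 L1 L1' L2 rtwo_def)
qed

lemma sol_only: assumes "a \<ge> 4/3" "solution (Sa a) r" shows "r = rone \<or> (a = 4/3 \<and> r = rtwo)"
proof -
  note S = assms(2)[unfolded sol_iff]
  have out: "\<And>v. v \<notin> {0,1,2} \<Longrightarrow> r v = 0" using S by blast
  have Sv: "\<And>v. v \<in> {0,1,2} \<Longrightarrow> 0 \<le> r v \<and> r v \<le> 1 \<and>
        (assets (Sa a) r v \<ge> bank_liab (Sa a) r v \<longrightarrow> r v = 1) \<and>
        (assets (Sa a) r v < bank_liab (Sa a) r v \<longrightarrow> r v = assets (Sa a) r v / bank_liab (Sa a) r v)"
    using S by blast
  have m0: "(0::nat) \<in> {0,1,2}" and m1: "(1::nat) \<in> {0,1,2}" and m2: "(2::nat) \<in> {0,1,2}" by auto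
  note S0 = Sv[OF m0] and S1 = Sv[OF m1] and S2 = Sv[OF m2]
  have B0: "0 \<le> r 0" "r 0 \<le> 1" and B1: "0 \<le> r 1" "r 1 \<le> 1" and B2: "0 \<le> r 2" "r 2 \<le> 1"
    using S0 S1 S2 by blast+
  have c0: "(a \<ge> 1 + 3 * (1 - r 1) \<longrightarrow> r 0 = 1) \<and> (a < 1 + 3 * (1 - r 1) \<longrightarrow> r 0 = a / (1 + 3 * (1 - r 1)))"
  proof -
    have "(assets (Sa a) r 0 \<ge> bank_liab (Sa a) r 0 \<longrightarrow> r 0 = 1) \<and>
        (assets (Sa a) r 0 < bank_liab (Sa a) r 0 \<longrightarrow> r 0 = assets (Sa a) r 0 / bank_liab (Sa a) r 0)"
      using S0 by blast
    then show ?thesis by (simp only: A0 L0)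
  qed
  have c1: "(r 0 \<ge> 1 \<longrightarrow> r 1 = 1) \<and> (r 0 < 1 \<longrightarrow> r 1 = r 0)"
  proof -
    have "(assets (Sa a) r 1 \<ge> bank_liab (Sa a) r 1 \<longrightarrow> r 1 = 1) \<and>
        (assets (Sa a) r 1 < bank_liab (Sa a) r 1 \<longrightarrow> r 1 = assets (Sa a) r 1 / bank_liab (Sa a) r 1)"
      using S1 by blast
    moreover have a1: "assets (Sa a) r 1 = r 0" using A1[of r a] B0 B1 by blast
    ultimately show ?thesis by (simp only: a1 L1 div_by_1)
  qed
  have r2: "r 2 = 1"
  proof -
    have "(assets (Sa a) r 2 \<ge> bank_liab (Sa a) r 2 \<longrightarrow> r 2 = 1)"
      using S2 by blast
    moreover have "assets (Sa a) r 2 \<ge> 0" using A2[of r a] B0 B1 by simp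
    ultimately show ?thesis by (simp add: L2)
  qed
  have eq: "r 1 = r 0" using c1 B0 by (cases "r 0 < 1") auto
  show ?thesis
  proof (cases "r 0 < 1")
    case False
    then have "r 0 = 1" "r 1 = 1" using B0 eq by auto
    then have "r = rone" unfolding rone_def
    proof (intro ext)
      fix v show "r v = (if v \<in> {0,1,2} then 1 else 0)"
        using r2 out \<open>r 0 = 1\<close> \<open>r 1 = 1\<close> by (cases "v \<in> {0,1,2}") auto
    qed
    then show ?thesis by simp
  next
    case True
    have "\<not> a \<ge> 4 - 3 * r 1" using c0 True by auto
    then have lt: "a < 4 - 3 * r 0" and e: "r 0 = a / (4 - 3 * r 0)" using c0 eq by auto
    have pos: "4 - 3 * r 0 > 0" using B0 by simp
    have "r 0 * (4 - 3 * r 0) = a" using e pos by (simp add: field_simps)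
    then have "3 * (r 0 - 2/3)^2 + (a - 4/3) = 0" by (simp add: power2_eq_square algebra_simps)
    moreover have "(r 0 - 2/3)^2 \<ge> 0" by simp
    ultimately have "a = 4/3" "(r 0 - 2/3)^2 = 0" using assms(1) by linarith+
    then have "r 0 = 2/3" by simp
    then have "r = rtwo" unfolding rtwo_def
    proof (intro ext)
      fix v show "r v = (if v = 0 \<or> v = 1 then 2/3 else if v = 2 then 1 else 0)"
        using r2 out eq \<open>r 0 = 2/3\<close> by (cases "v \<in> {0,1,2}") auto
    qed
    then show ?thesis using \<open>a = 4/3\<close> by simp
  qed
qed

lemma bm: assumes "a \<ge> 0" shows "base_model (Sa a)"
proof -
  have "Debt 1 2 1 1 \<in> CC" by (simp add: CC_def)
  then have "\<forall>k\<in>contracts (Sa a). contract_wf (Sa a) k"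
    by (auto simp: CC_def Sa_def)
  then show ?thesis using assms
    by (simp add: base_model_def wf_system_def Sa_def CC_def)
qed

lemma upd: "(Sa (4/3))\<lparr>ext := (ext (Sa (4/3)))(0 := ext (Sa (4/3)) 0 + 1)\<rparr> = Sa (7/3)"
  by (auto simp: Sa_def)

theorem mainTheorem6:
  shows "\<exists>S v (x::real). base_model S \<and> v \<in> banks S \<and> x > 0 \<and>
    (\<exists>r1 r2. r1 \<noteq> r2 \<and> {r. solution S r} = {r1, r2} \<and> payoff S r2 v = 0 \<and>
      (let S' = S\<lparr>ext := (ext S)(v := ext S v + x)\<rparr> in
        {r. solution S' r} = {r1} \<and> payoff S' r1 v > x))"
proof (intro exI conjI)
  show "base_model (Sa (4/3))" by (rule bm) simp
  show "(0::nat) \<in> banks (Sa (4/3))" by (simp add: bSa)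
  show "(1::real) > 0" by simp
  show "rone \<noteq> rtwo"
  proof
    assume "rone = rtwo" then have "rone 0 = rtwo 0" by simp
    then show False by (simp add: rone_def rtwo_def)
  qed
  show "{r. solution (Sa (4/3)) r} = {rone, rtwo}"
    using sol_only[of "4/3"] sol_one[of "4/3"] sol_two by auto
  have "payoff (Sa (4/3)) rtwo 0 = max (4/3 - 2) 0"
    by (simp add: payoff_def A0 L0 rtwo_def)
  then show "payoff (Sa (4/3)) rtwo 0 = 0" by simp
  have s1: "{r. solution (Sa (7/3)) r} = {rone}"
    using sol_only[of "7/3"] sol_one[of "7/3"] by auto
  have "payoff (Sa (7/3)) rone 0 = max (7/3 - 1) 0"
    by (simp add: payoff_def A0 L0 rone_def)
  then have s2: "payoff (Sa (7/3)) rone 0 > 1" by simp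
  show "let S' = (Sa (4/3))\<lparr>ext := (ext (Sa (4/3)))(0 := ext (Sa (4/3)) 0 + 1)\<rparr> in
        {r. solution S' r} = {rone} \<and> payoff S' rone 0 > 1"
    unfolding upd Let_def using s1 s2 by simp
qed

end
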